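(* Let $G$ be a locally compact abelian group (written additively), let $X$ be a topological vector space over $\mathbf{C}$, and let $J\subseteq G$ be a subsemigroup with non-empty interior such that $G=J-J=\{u-v: u,v\in J\}$. Then for each $n\in\mathbf{Z}_+$ the restriction map $r:P^{n}(G,X)\to P^{n}(J,X)$, $p\mapsto p|_J$, is a linear bijection. In particular, every polynomial $q:J\to X$ has a unique extension to a polynomial $p:G\to X$.
   Context: $\mathbf{Z}_+=\{0,1,2,\dots\}$. For an abelian topological semigroup $S$ (e.g. $J$ or $G$) and a topological vector space $X$, a continuous function $p:S\to X$ is a polynomial of degree at most $n$ if for all $s,t\in S$ there exist $a_0(s,t),\dots,a_n(s,t)\in X$ with $p(s+mt)=\sum_{j=0}^n a_j(s,t)m^j$ for all $m\in\mathbf{Z}_+$ (i.e. $m\mapsto p(s+mt)$ is a polynomial in $m$ of degree at most $n$). $P^n(S,X)$ denotes the space of all such polynomials. *)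

theory Defs
  imports "HOL-Analysis.Analysis"
begin

primrec nsmul :: "nat \<Rightarrow> 'a::monoid_add \<Rightarrow> 'a" where
  "nsmul 0 t = 0"
| "nsmul (Suc m) t = t + nsmul m t"

definition complex_tvs :: "(complex \<Rightarrow> 'x::topological_ab_group_add \<Rightarrow> 'x) \<Rightarrow> bool" where
  "complex_tvs smul \<longleftrightarrow> module smul \<and> continuous_on UNIV (\<lambda>z. smul (fst z) (snd z))"

definition polynomial_on ::
  "(complex \<Rightarrow> 'x::topological_ab_group_add \<Rightarrow> 'x) \<Rightarrow> 'g::{topological_space,monoid_add} set
     \<Rightarrow> nat \<Rightarrow> ('g \<Rightarrow> 'x) \<Rightarrow> bool" where
  "polynomial_on smul S n p \<longleftrightarrow> continuous_on S p \<and>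
     (\<forall>s\<in>S. \<forall>t\<in>S. \<exists>a::nat \<Rightarrow> 'x. \<forall>m::nat.
        p (s + nsmul m t) = (\<Sum>j\<le>n. smul (of_nat m ^ j) (a j)))"

definition Pspace ::
  "(complex \<Rightarrow> 'x::topological_ab_group_add \<Rightarrow> 'x) \<Rightarrow> 'g::{topological_space,monoid_add} set
     \<Rightarrow> nat \<Rightarrow> ('g \<Rightarrow> 'x) set" where
  "Pspace smul S n = {p. polynomial_on smul S n p \<and> p \<in> extensional S}"

end

theory Submission
  imports Defs "HOL-Computational_Algebra.Polynomial"
begin

lemma pascal_alt:
  fixes f :: "nat \<Rightarrow> complex"
  shows "(\<Sum>k\<le>Suc d. (-1)^k * of_nat (Suc d choose k) * f k)
       = (\<Sum>k\<le>d. (-1)^k * of_nat (d choose k) * (f k - f (Suc k)))"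
proof -
  have A0: "(\<Sum>k\<le>Suc d. (-1)^k * of_nat (Suc d choose k) * f k)
     = f 0 + (\<Sum>k\<le>d. (-1)^(Suc k) * of_nat (Suc d choose Suc k) * f (Suc k))"
    by (subst sum.atMost_Suc_shift) simp
  have A1: "(-1)^(Suc k) * of_nat (Suc d choose Suc k) * f (Suc k)
      = (-1)^(Suc k) * of_nat (d choose k) * f (Suc k) + (-1)^(Suc k) * of_nat (d choose Suc k) * f (Suc k)" for k
    by (simp add: algebra_simps)
  have A: "(\<Sum>k\<le>Suc d. (-1)^k * of_nat (Suc d choose k) * f k)
     = f 0 + ((\<Sum>k\<le>d. (-1)^(Suc k) * of_nat (d choose k) * f (Suc k))
           + (\<Sum>k\<le>d. (-1)^(Suc k) * of_nat (d choose Suc k) * f (Suc k)))"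
    unfolding A0 A1 sum.distrib ..
  have B: "(\<Sum>k\<le>d. (-1)^k * of_nat (d choose k) * f k)
      = f 0 + (\<Sum>k\<le>d. (-1)^(Suc k) * of_nat (d choose Suc k) * f (Suc k))"
  proof (cases d)
    case 0 then show ?thesis by simp
  next
    case (Suc d')
    have "(\<Sum>k\<le>d. (-1)^k * of_nat (d choose k) * f k)
       = f 0 + (\<Sum>k\<le>d'. (-1)^(Suc k) * of_nat (d choose Suc k) * f (Suc k))"
      unfolding Suc by (subst sum.atMost_Suc_shift) simp
    also have "\<dots> = f 0 + (\<Sum>k\<le>d. (-1)^(Suc k) * of_nat (d choose Suc k) * f (Suc k))"
      unfolding Suc by (simp add: binomial_eq_0)
    finally show ?thesis .
  qed
  have C: "(\<Sum>k\<le>d. (-1)^(Suc k) * of_nat (d choose k) * f (Suc k))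
      = - (\<Sum>k\<le>d. (-1)^k * of_nat (d choose k) * f (Suc k))"
    by (simp add: sum_negf[symmetric])
  have R: "(\<Sum>k\<le>d. (-1)^k * of_nat (d choose k) * (f k - f (Suc k)))
      = (\<Sum>k\<le>d. (-1)^k * of_nat (d choose k) * f k) - (\<Sum>k\<le>d. (-1)^k * of_nat (d choose k) * f (Suc k))"
    by (simp add: right_diff_distrib sum_subtractf)
  show ?thesis unfolding A R B C by (simp only: diff_conv_add_uminus add_ac)
qed

lemma fd_poly:
  fixes P :: "complex poly"
  assumes "degree P < d"
  shows "(\<Sum>k\<le>d. (-1)^k * of_nat (d choose k) * poly P (x + of_nat k)) = 0"
  using assms
proof (induction d arbitrary: P x)
  case 0 then show ?case by simp
next
  case (Suc d)
  define Q where "Q = P - pcompose P [:1,1:]"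
  have Qp: "poly Q y = poly P y - poly P (y + 1)" for y
    by (simp add: Q_def poly_pcompose algebra_simps)
  have "(\<Sum>k\<le>Suc d. (-1)^k * of_nat (Suc d choose k) * poly P (x + of_nat k))
     = (\<Sum>k\<le>d. (-1)^k * of_nat (d choose k) * poly Q (x + of_nat k))"
    by (subst pascal_alt) (simp add: Qp add_ac)
  also have "\<dots> = 0"
  proof (cases "degree P = 0")
    case True
    then obtain c where "P = [:c:]" using degree_eq_zeroE by blast
    then have "Q = 0" by (simp add: Q_def)
    then show ?thesis by simp
  next
    case False
    have dq: "degree (pcompose P [:1,1:]) = degree P" by (simp add: degree_pcompose)
    have lc: "coeff (pcompose P [:1,1:]) (degree P) = coeff P (degree P)"
      using lead_coeff_comp[of "[:1,1:]" P] dq by simp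
    have "degree Q < degree P"
    proof (rule degree_lessI)
      show "Q \<noteq> 0 \<or> 0 < degree P" using False by simp
      show "\<forall>k\<ge>degree P. coeff Q k = 0"
      proof (intro allI impI)
        fix k assume "degree P \<le> k"
        then show "coeff Q k = 0"
          using lc dq coeff_eq_0[of P k] coeff_eq_0[of "pcompose P [:1,1:]" k]
          by (cases "k = degree P") (auto simp: Q_def)
      qed
    qed
    with Suc.prems have "degree Q < d" by simp
    then show ?thesis by (rule Suc.IH)
  qed
  finally show ?case .
qed

lemma fd_pow:
  assumes "j < d"
  shows "(\<Sum>k\<le>d. (-1)^k * of_nat (d choose k) * (of_nat k :: complex) ^ j) = 0"
  using fd_poly[of "monom 1 j" d 0] assms by (simp add: poly_monom degree_monom_eq)

lemma nsmul_add_nat: "nsmul (a + b) t = nsmul a t + (nsmul b t :: 'a::monoid_add)"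
  by (induction a) (simp_all add: add.assoc)

lemma nsmul_plus: "nsmul m (t + u) = nsmul m t + (nsmul m u :: 'a::comm_monoid_add)"
  by (induction m) (simp_all add: add_ac)

lemma nsmul_mult: "nsmul (a * b) t = nsmul a (nsmul b t :: 'a::monoid_add)"
  by (induction a) (simp_all add: nsmul_add_nat)

lemma nsmul_one [simp]: "nsmul (Suc 0) t = t"
  by simp

lemma nsmul_comm: "nsmul a (nsmul b t) = nsmul b (nsmul a t :: 'a::monoid_add)"
  by (metis nsmul_mult mult.commute)

lemma nsmul_Suc_right: "nsmul (Suc m) t = nsmul m t + (t::'a::monoid_add)"
proof -
  have "nsmul (m + 1) t = nsmul m t + nsmul 1 t" by (rule nsmul_add_nat)
  then show ?thesis by simp
qed

lemma semigroup_nsmul: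
  assumes sg: "\<forall>u\<in>J. \<forall>v\<in>J. u + v \<in> J" and s: "s \<in> J" and t: "t \<in> J"
  shows "s + nsmul m t \<in> J"
proof (induction m)
  case 0 then show ?case using s by simp
next
  case (Suc m)
  have "s + nsmul (Suc m) t = (s + nsmul m t) + t"
    by (simp only: nsmul_Suc_right add.assoc)
  then show ?case using Suc sg t by simp
qed

lemma semigroup_nsmul_pos:
  assumes sg: "\<forall>u\<in>J. \<forall>v\<in>J. u + v \<in> J" and t: "t \<in> J" and xt: "x + t \<in> J" and k: "k \<ge> 1"
  shows "x + nsmul k (t::'a::monoid_add) \<in> J"
proof -
  obtain k' where k': "k = Suc k'" using k by (cases k) auto
  have "x + nsmul k t = (x + t) + nsmul k' t" by (simp add: k' add.assoc)
  then show ?thesis using semigroup_nsmul[OF sg xt t] by simp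
qed

definition ecoef :: "nat \<Rightarrow> nat \<Rightarrow> complex" where
  "ecoef d k = - ((-1)^k * of_nat (d choose k))"

lemma fd_module:
  assumes md: "module smul"
    and f: "\<forall>m. f m = (\<Sum>j\<le>n. smul (of_nat m ^ j) (a j))"
  shows "f 0 = (\<Sum>k\<in>{1..Suc n}. smul (ecoef (Suc n) k) (f k))"
proof -
  interpret module smul by (rule md)
  define c where "c k = (-1)^k * (of_nat (Suc n choose k) :: complex)" for k
  have "(\<Sum>k\<le>Suc n. smul (c k) (f k))
      = (\<Sum>k\<le>Suc n. \<Sum>j\<le>n. smul (c k * of_nat k ^ j) (a j))"
    by (simp add: f scale_sum_right)
  also have "\<dots> = (\<Sum>j\<le>n. \<Sum>k\<le>Suc n. smul (c k * of_nat k ^ j) (a j))"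
    by (rule sum.swap)
  also have "\<dots> = (\<Sum>j\<le>n. smul (\<Sum>k\<le>Suc n. c k * of_nat k ^ j) (a j))"
    by (simp only: scale_sum_left)
  also have "\<dots> = 0"
  proof (rule sum.neutral, rule ballI)
    fix j assume "j \<in> {..n}"
    then have "(\<Sum>k\<le>Suc n. c k * of_nat k ^ j) = 0"
      unfolding c_def by (intro fd_pow) simp
    then show "smul (\<Sum>k\<le>Suc n. c k * of_nat k ^ j) (a j) = 0" by simp
  qed
  finally have Z: "(\<Sum>k\<le>Suc n. smul (c k) (f k)) = 0" .
  have "(\<Sum>k\<le>Suc n. smul (c k) (f k)) = smul (c 0) (f 0) + (\<Sum>k\<in>{1..Suc n}. smul (c k) (f k))"
  proof -
    have "{..Suc n} = insert 0 {1..Suc n}" by auto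
    then show ?thesis by simp
  qed
  with Z have "f 0 + (\<Sum>k\<in>{1..Suc n}. smul (c k) (f k)) = 0" by (simp add: c_def)
  then have "f 0 = - (\<Sum>k\<in>{1..Suc n}. smul (c k) (f k))" by (metis add_diff_cancel_right' diff_0)
  also have "\<dots> = (\<Sum>k\<in>{1..Suc n}. smul (ecoef (Suc n) k) (f k))"
    by (simp add: ecoef_def c_def sum_negf)
  finally show ?thesis .
qed

lemma poly_fd:
  assumes md: "module smul" and p: "polynomial_on smul S n p" and s: "s \<in> S" and t: "t \<in> S"
  shows "p s = (\<Sum>k\<in>{1..Suc n}. smul (ecoef (Suc n) k) (p (s + nsmul k t)))"
proof -
  from p s t obtain a where a: "\<forall>m. p (s + nsmul m t) = (\<Sum>j\<le>n. smul (of_nat m ^ j) (a j))"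
    unfolding polynomial_on_def by blast
  from fd_module[OF md a] show ?thesis by simp
qed

lemma polynomial_on_mono:
  assumes md: "module smul" and p: "polynomial_on smul S n p" and le: "n \<le> N"
  shows "polynomial_on smul S N p"
  unfolding polynomial_on_def
proof (intro conjI ballI)
  interpret module smul by (rule md)
  show "continuous_on S p" using p by (simp add: polynomial_on_def)
  fix s t assume s: "s \<in> S" and t: "t \<in> S"
  from p s t obtain a where a: "\<forall>m. p (s + nsmul m t) = (\<Sum>j\<le>n. smul (of_nat m ^ j) (a j))"
    unfolding polynomial_on_def by blast
  define b where "b j = (if j \<le> n then a j else 0)" for j
  have "p (s + nsmul m t) = (\<Sum>j\<le>N. smul (of_nat m ^ j) (b j))" for m
  proof -
    have "(\<Sum>j\<le>N. smul (of_nat m ^ j) (b j)) = (\<Sum>j\<le>n. smul (of_nat m ^ j) (b j))"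
      by (rule sum.mono_neutral_right) (use le in \<open>auto simp: b_def\<close>)
    also have "\<dots> = (\<Sum>j\<le>n. smul (of_nat m ^ j) (a j))" by (simp add: b_def)
    finally show ?thesis using a by simp
  qed
  then show "\<exists>a. \<forall>m. p (s + nsmul m t) = (\<Sum>j\<le>N. smul (of_nat m ^ j) (a j))" by blast
qed

lemma uniq_ext:
  assumes md: "module smul"
    and sg: "\<forall>u\<in>J. \<forall>v\<in>J. u + v \<in> J"
    and gen: "{u - v | u v. u \<in> J \<and> v \<in> J} = (UNIV :: 'g::{ab_group_add,topological_space} set)"
    and p1: "polynomial_on smul UNIV n p1" and p2: "polynomial_on smul UNIV n p2"
    and eq: "\<forall>x\<in>J. p1 x = p2 x"
  shows "p1 = p2"
proof
  fix x :: 'g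
  from gen obtain u v where u: "u \<in> J" and v: "v \<in> J" and x: "x = u - v" by blast
  have xv: "x + v \<in> J" using u x by simp
  have mem: "x + nsmul k v \<in> J" if "k \<in> {1..Suc n}" for k
    using semigroup_nsmul_pos[OF sg v xv] that by simp
  have "p1 x = (\<Sum>k\<in>{1..Suc n}. smul (ecoef (Suc n) k) (p1 (x + nsmul k v)))"
    by (rule poly_fd[OF md p1]) auto
  also have "\<dots> = (\<Sum>k\<in>{1..Suc n}. smul (ecoef (Suc n) k) (p2 (x + nsmul k v)))"
    using mem eq by (intro sum.cong) auto
  also have "\<dots> = p2 x"
    by (rule poly_fd[OF md p2, symmetric]) auto
  finally show "p1 x = p2 x" .
qed
lemma smul_isCont:
  assumes tvs: "complex_tvs smul" and g: "isCont g y"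
  shows "isCont (\<lambda>x. smul c (g x)) y"
proof -
  have h0: "continuous_on UNIV (\<lambda>z. smul (fst z) (snd z))"
    using tvs by (simp add: complex_tvs_def)
  have "continuous_on UNIV (\<lambda>x. (c, x))" by (intro continuous_intros)
  from continuous_on_compose2[OF h0 this] have hc: "continuous_on UNIV (smul c)" by simp
  have "((\<lambda>x. smul c (g x)) \<longlongrightarrow> smul c (g y)) (at y)"
    by (rule continuous_on_tendsto_compose[OF hc g[unfolded isCont_def]]) auto
  then show ?thesis by (simp add: isCont_def)
qed

lemma interior_add_mem:
  fixes J :: "'g::topological_ab_group_add set"
  assumes sg: "\<forall>u\<in>J. \<forall>v\<in>J. u + v \<in> J" and a: "a \<in> J" and w: "w \<in> interior J"
  shows "w + a \<in> interior J"
proof (rule interiorI)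
  let ?S = "(\<lambda>y. y - a) -` interior J"
  show "open ?S"
    by (intro open_vimage open_interior continuous_intros)
  show "w + a \<in> ?S" using w by simp
  show "?S \<subseteq> J"
  proof
    fix y assume "y \<in> ?S"
    then have "y - a \<in> J" using interior_subset by auto
    then have "(y - a) + a \<in> J" using sg a by blast
    then show "y \<in> J" by simp
  qed
qed

lemma ext_exists:
  fixes J :: "'g::{topological_ab_group_add, t2_space} set"
    and smul :: "complex \<Rightarrow> 'x::topological_ab_group_add \<Rightarrow> 'x"
  assumes tvs: "complex_tvs smul"
    and sg: "\<forall>u\<in>J. \<forall>v\<in>J. u + v \<in> J"
    and int: "interior J \<noteq> {}"
    and gen: "{u - v | u v. u \<in> J \<and> v \<in> J} = UNIV"
    and q: "polynomial_on smul J n q"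
  shows "\<exists>P. polynomial_on smul UNIV n P \<and> (\<forall>x\<in>J. P x = q x)"
proof -
  have md: "module smul" using tvs by (simp add: complex_tvs_def)
  interpret module smul by (rule md)
  define e where "e = ecoef (Suc n)"
  define K where "K = {1..Suc n}"
  define E where "E x t = (\<Sum>k\<in>K. smul (e k) (q (x + nsmul k t)))" for x t
  have qfd: "q s = (\<Sum>k\<in>K. smul (e k) (q (s + nsmul k t)))" if "s \<in> J" "t \<in> J" for s t
    unfolding e_def K_def by (rule poly_fd[OF md q that])
  have memK: "x + nsmul k t \<in> J" if "t \<in> J" "x + t \<in> J" "k \<in> K" for x t k
    using semigroup_nsmul_pos[OF sg that(1,2)] that(3) by (simp add: K_def)
  have W: "E x t = E x t'" if t: "t \<in> J" "x + t \<in> J" and t': "t' \<in> J" "x + t' \<in> J" for x t t'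
  proof -
    define g where "g k l = q (x + nsmul k t + nsmul l t')" for k l
    have h1: "q (x + nsmul k t) = (\<Sum>l\<in>K. smul (e l) (g k l))" if "k \<in> K" for k
      unfolding g_def by (rule qfd[OF memK[OF t that] t'(1)])
    have h2: "q (x + nsmul l t') = (\<Sum>k\<in>K. smul (e k) (g k l))" if "l \<in> K" for l
    proof -
      have "q (x + nsmul l t') = (\<Sum>k\<in>K. smul (e k) (q (x + nsmul l t' + nsmul k t)))"
        by (rule qfd[OF memK[OF t' that] t(1)])
      also have "\<dots> = (\<Sum>k\<in>K. smul (e k) (g k l))"
        unfolding g_def by (simp add: add_ac)
      finally show ?thesis .
    qed
    have "E x t = (\<Sum>k\<in>K. smul (e k) (\<Sum>l\<in>K. smul (e l) (g k l)))"
      unfolding E_def by (intro sum.cong refl) (simp add: h1)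
    also have "\<dots> = (\<Sum>k\<in>K. \<Sum>l\<in>K. smul (e k * e l) (g k l))"
      by (simp add: scale_sum_right)
    also have "\<dots> = (\<Sum>l\<in>K. \<Sum>k\<in>K. smul (e k * e l) (g k l))"
      by (rule sum.swap)
    also have "\<dots> = (\<Sum>l\<in>K. smul (e l) (\<Sum>k\<in>K. smul (e k) (g k l)))"
      by (simp add: scale_sum_right mult.commute)
    also have "\<dots> = E x t'"
      unfolding E_def by (intro sum.cong refl) (simp add: h2)
    finally show ?thesis .
  qed
  define P where "P x = E x (SOME t. t \<in> J \<and> x + t \<in> J)" for x
  have PE: "P x = E x t" if "t \<in> J" "x + t \<in> J" for x t
  proof -
    have ex: "\<exists>t. t \<in> J \<and> x + t \<in> J" using that by blast
    from someI_ex[OF ex] have "(SOME t. t \<in> J \<and> x + t \<in> J) \<in> J"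
      "x + (SOME t. t \<in> J \<and> x + t \<in> J) \<in> J" by auto
    then show ?thesis unfolding P_def using W that by blast
  qed
  have onJ: "\<forall>x\<in>J. P x = q x"
  proof
    fix x assume x: "x \<in> J"
    have "x + x \<in> J" using sg x by blast
    then have "P x = E x x" using PE x by blast
    also have "\<dots> = q x" unfolding E_def using qfd[OF x x] by simp
    finally show "P x = q x" .
  qed
  have cont: "continuous_on UNIV P"
  proof (rule continuous_at_imp_continuous_on, intro ballI)
    fix x0 :: 'g
    from int obtain w where w: "w \<in> interior J" by blast
    have wJ: "w \<in> J" using w interior_subset by blast
    from gen obtain u v where u: "u \<in> J" and v: "v \<in> J" and x0: "x0 = u - v" by blast
    define t where "t = w + v"
    have tJ: "t \<in> J" using sg wJ v by (simp add: t_def)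
    have x0k: "x0 + nsmul k t \<in> interior J" if kK: "k \<in> K" for k
    proof -
      obtain k' where k': "k = Suc k'" using kK by (cases k) (auto simp: K_def)
      have "x0 + nsmul k t = w + ((x0 + v) + (nsmul k' v + nsmul k' w))"
        by (simp add: k' t_def nsmul_plus add_ac)
      also have "x0 + v = u" by (simp add: x0)
      finally have eq: "x0 + nsmul k t = w + ((u + nsmul k' v) + nsmul k' w)"
        by (simp add: add_ac)
      have "(u + nsmul k' v) + nsmul k' w \<in> J"
        by (intro semigroup_nsmul[OF sg _ wJ] semigroup_nsmul[OF sg u v])
      from interior_add_mem[OF sg this w] eq show ?thesis by simp
    qed
    define U where "U = (\<Inter>k\<in>K. (\<lambda>x. x + nsmul k t) -` interior J)"
    have "open U" unfolding U_def K_def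
      by (intro open_INT ballI finite_atLeastAtMost open_vimage open_interior continuous_intros)
    moreover have "x0 \<in> U" using x0k by (simp add: U_def)
    moreover have "P x = E x t" if "x \<in> U" for x
    proof -
      have "1 \<in> K" by (simp add: K_def)
      from that have "\<forall>k\<in>K. x + nsmul k t \<in> interior J" by (simp add: U_def)
      from bspec[OF this \<open>1 \<in> K\<close>] have "x + t \<in> interior J" by simp
      then have "x + t \<in> J" using interior_subset by auto
      then show ?thesis using PE tJ by blast
    qed
    ultimately have ev: "eventually (\<lambda>x. P x = E x t) (nhds x0)"
      unfolding eventually_nhds by blast
    have "isCont (\<lambda>x. E x t) x0"
      unfolding E_def
    proof (rule continuous_sum)
      fix k assume k: "k \<in> K"
      have "continuous_on J q" using q by (simp add: polynomial_on_def)
      from continuous_on_interior[OF this x0k[OF k]] have qc: "isCont q (x0 + nsmul k t)" .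
      have "isCont (\<lambda>x. x + nsmul k t) x0" by (intro continuous_intros)
      from isCont_o2[OF this qc] have "isCont (\<lambda>x. q (x + nsmul k t)) x0" .
      then show "isCont (\<lambda>x. smul (e k) (q (x + nsmul k t))) x0"
        by (rule smul_isCont[OF tvs])
    qed
    then show "isCont P x0" using isCont_cong[OF ev] by simp
  qed
  have polyP: "\<exists>a. \<forall>m. P (s + nsmul m t) = (\<Sum>j\<le>n. smul (of_nat m ^ j) (a j))" for s t
  proof -
    from gen obtain u v where u: "u \<in> J" and v: "v \<in> J" and tuv: "t = u - v" by blast
    from gen obtain u0 v0 where u0: "u0 \<in> J" and v0: "v0 \<in> J" and suv: "s = u0 - v0" by blast
    have sr: "s + v0 = u0" by (simp add: suv)
    have tr: "t + v = u" by (simp add: tuv)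
    have A1: "s + nsmul k v0 \<in> J" if "k \<in> K" for k using memK[OF v0 _ that] sr u0 by simp
    have A2: "t + nsmul k v \<in> J" if "k \<in> K" for k using memK[OF v _ that] tr u by simp
    have "\<forall>k\<in>K. \<exists>a. \<forall>m. q ((s + nsmul k v0) + nsmul m (t + nsmul k v))
              = (\<Sum>j\<le>n. smul (of_nat m ^ j) (a j))"
      using q A1 A2 unfolding polynomial_on_def by blast
    from bchoice[OF this] obtain A where A: "\<forall>k\<in>K. \<forall>m. q ((s + nsmul k v0) + nsmul m (t + nsmul k v))
              = (\<Sum>j\<le>n. smul (of_nat m ^ j) (A k j))"
      by blast
    have "P (s + nsmul m t) = (\<Sum>j\<le>n. smul (of_nat m ^ j) (\<Sum>k\<in>K. smul (e k) (A k j)))" for m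
    proof -
      define tm where "tm = v0 + nsmul m v"
      have tmJ: "tm \<in> J" unfolding tm_def by (rule semigroup_nsmul[OF sg v0 v])
      have "s + nsmul m t + tm = (s + v0) + nsmul m (t + v)"
        by (simp add: tm_def nsmul_plus add_ac)
      then have "s + nsmul m t + tm \<in> J"
        using semigroup_nsmul[OF sg u0 u, of m] sr tr by simp
      then have "P (s + nsmul m t) = E (s + nsmul m t) tm" using PE tmJ by blast
      also have "\<dots> = (\<Sum>k\<in>K. smul (e k) (q ((s + nsmul k v0) + nsmul m (t + nsmul k v))))"
        unfolding E_def
      proof (intro sum.cong refl arg_cong[where f="\<lambda>z. smul _ (q z)"])
        fix k
        show "s + nsmul m t + nsmul k tm = s + nsmul k v0 + nsmul m (t + nsmul k v)"
          by (simp add: tm_def nsmul_plus nsmul_comm[of k m] add_ac)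
      qed
      also have "\<dots> = (\<Sum>k\<in>K. smul (e k) (\<Sum>j\<le>n. smul (of_nat m ^ j) (A k j)))"
        using A by (intro sum.cong refl) simp
      also have "\<dots> = (\<Sum>k\<in>K. \<Sum>j\<le>n. smul (e k * of_nat m ^ j) (A k j))"
        by (simp add: scale_sum_right)
      also have "\<dots> = (\<Sum>j\<le>n. \<Sum>k\<in>K. smul (e k * of_nat m ^ j) (A k j))"
        by (rule sum.swap)
      also have "\<dots> = (\<Sum>j\<le>n. smul (of_nat m ^ j) (\<Sum>k\<in>K. smul (e k) (A k j)))"
        by (simp add: scale_sum_right mult.commute)
      finally show ?thesis .
    qed
    then show ?thesis by (intro exI[where x="\<lambda>j. \<Sum>k\<in>K. smul (e k) (A k j)"] allI)
  qed
  have "polynomial_on smul UNIV n P"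
    unfolding polynomial_on_def using cont polyP by blast
  with onJ show ?thesis by blast
qed
lemma restr_poly:
  fixes J :: "'g::{topological_ab_group_add, t2_space} set"
    and smul :: "complex \<Rightarrow> 'x::topological_ab_group_add \<Rightarrow> 'x"
  assumes sg: "\<forall>u\<in>J. \<forall>v\<in>J. u + v \<in> J" and p: "polynomial_on smul UNIV n p"
  shows "polynomial_on smul J n (restrict p J)"
  unfolding polynomial_on_def
proof (intro conjI ballI)
  have "continuous_on J p" using p continuous_on_subset by (auto simp: polynomial_on_def)
  then show "continuous_on J (restrict p J)"
    using continuous_on_cong[of J J "restrict p J" p] by simp
  fix s t assume s: "s \<in> J" and t: "t \<in> J"
  from p obtain a where a: "\<forall>m. p (s + nsmul m t) = (\<Sum>j\<le>n. smul (of_nat m ^ j) (a j))"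
    unfolding polynomial_on_def by blast
  have "restrict p J (s + nsmul m t) = (\<Sum>j\<le>n. smul (of_nat m ^ j) (a j))" for m
    using a semigroup_nsmul[OF sg s t, of m] by simp
  then show "\<exists>a. \<forall>m. restrict p J (s + nsmul m t) = (\<Sum>j\<le>n. smul (of_nat m ^ j) (a j))" by blast
qed
theorem theorem1p5:
  fixes J :: "'g::{topological_ab_group_add, t2_space} set"
    and smul :: "complex \<Rightarrow> 'x::topological_ab_group_add \<Rightarrow> 'x"
  assumes lc: "locally_compact_space (euclidean :: 'g topology)"
    and tvs: "complex_tvs smul"
    and semigroup: "\<forall>u\<in>J. \<forall>v\<in>J. u + v \<in> J"
    and interior: "interior J \<noteq> {}"
    and gen: "{u - v | u v. u \<in> J \<and> v \<in> J} = UNIV"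
  shows "(\<forall>n. bij_betw (\<lambda>p. restrict p J) (Pspace smul UNIV n) (Pspace smul J n)
            \<and> (\<forall>p\<in>Pspace smul UNIV n. \<forall>q\<in>Pspace smul UNIV n. \<forall>c d.
                 restrict (\<lambda>x. smul c (p x) + smul d (q x)) J
                 = (\<lambda>x\<in>J. smul c (restrict p J x) + smul d (restrict q J x))))
       \<and> (\<forall>q n. polynomial_on smul J n q \<longrightarrow>
            (\<exists>!p. (\<exists>n'. polynomial_on smul UNIV n' p) \<and> (\<forall>x\<in>J. p x = q x)))"
proof (intro conjI allI impI)
  have md: "module smul" using tvs by (simp add: complex_tvs_def)
  fix n
  show "bij_betw (\<lambda>p. restrict p J) (Pspace smul UNIV n) (Pspace smul J n)"
    unfolding bij_betw_def
  proof (intro conjI)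
    show "inj_on (\<lambda>p. restrict p J) (Pspace smul UNIV n)"
    proof (rule inj_onI)
      fix p1 p2 assume p1: "p1 \<in> Pspace smul UNIV n" and p2: "p2 \<in> Pspace smul UNIV n"
        and eq: "restrict p1 J = restrict p2 J"
      have "\<forall>x\<in>J. p1 x = p2 x"
      proof
        fix x assume "x \<in> J"
        then show "p1 x = p2 x" using fun_cong[OF eq, of x] by simp
      qed
      moreover have "polynomial_on smul UNIV n p1" using p1 by (simp add: Pspace_def)
      moreover have "polynomial_on smul UNIV n p2" using p2 by (simp add: Pspace_def)
      ultimately show "p1 = p2"
        using uniq_ext[OF md semigroup gen] by blast
    qed
    show "(\<lambda>p. restrict p J) ` Pspace smul UNIV n = Pspace smul J n"
    proof
      show "(\<lambda>p. restrict p J) ` Pspace smul UNIV n \<subseteq> Pspace smul J n"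
      proof (rule image_subsetI)
        fix p :: "'g \<Rightarrow> 'x" assume "p \<in> Pspace smul UNIV n"
        then have "polynomial_on smul UNIV n p" by (simp add: Pspace_def)
        from restr_poly[OF semigroup this] show "restrict p J \<in> Pspace smul J n"
          by (simp add: Pspace_def)
      qed
      show "Pspace smul J n \<subseteq> (\<lambda>p. restrict p J) ` Pspace smul UNIV n"
      proof
        fix q assume q: "q \<in> Pspace smul J n"
        then have qp: "polynomial_on smul J n q" and qe: "q \<in> extensional J"
          by (auto simp: Pspace_def)
        from ext_exists[OF tvs semigroup interior gen qp] obtain P where
          P: "polynomial_on smul UNIV n P" and PJ: "\<forall>x\<in>J. P x = q x" by blast
        have "restrict P J = q"
          using qe PJ by (auto simp: restrict_def extensional_def)
        moreover have "P \<in> Pspace smul UNIV n" using P by (simp add: Pspace_def)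
        ultimately show "q \<in> (\<lambda>p. restrict p J) ` Pspace smul UNIV n" by blast
      qed
    qed
  qed
  show "\<forall>p\<in>Pspace smul UNIV n. \<forall>q\<in>Pspace smul UNIV n. \<forall>c d.
                 restrict (\<lambda>x. smul c (p x) + smul d (q x)) J
                 = (\<lambda>x\<in>J. smul c (restrict p J x) + smul d (restrict q J x))"
    by (intro ballI allI ext) (simp add: restrict_def)
next
  have md: "module smul" using tvs by (simp add: complex_tvs_def)
  fix q n assume qp: "polynomial_on smul J n q"
  from ext_exists[OF tvs semigroup interior gen qp] obtain P where
    P: "polynomial_on smul UNIV n P" and PJ: "\<forall>x\<in>J. P x = q x" by blast
  show "\<exists>!p. (\<exists>n'. polynomial_on smul UNIV n' p) \<and> (\<forall>x\<in>J. p x = q x)"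
  proof (rule ex1I)
    show "(\<exists>n'. polynomial_on smul UNIV n' P) \<and> (\<forall>x\<in>J. P x = q x)" using P PJ by blast
  next
    fix p assume "(\<exists>n'. polynomial_on smul UNIV n' p) \<and> (\<forall>x\<in>J. p x = q x)"
    then obtain n' where p: "polynomial_on smul UNIV n' p" and pJ: "\<forall>x\<in>J. p x = q x" by blast
    have p': "polynomial_on smul UNIV (max n n') p"
      by (rule polynomial_on_mono[OF md p]) simp
    have P': "polynomial_on smul UNIV (max n n') P"
      by (rule polynomial_on_mono[OF md P]) simp
    show "p = P" using uniq_ext[OF md semigroup gen p' P'] pJ PJ by simp
  qed
qed

end
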